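(* Let $(Q,\rightarrow)$ be a finite transition system, $\mathscr{R}$ a preorder on $Q$ and $\mathscr{P}\subseteq\mathscr{R}$ an equivalence relation. Then the following are equivalent: (i) for all $b,d,d'\in Q$ with $d\,\mathscr{P}\,d'$: $d\in\rightarrow^{-1}(\mathscr{R}(b))\iff d'\in\rightarrow^{-1}(\mathscr{R}(b))$; (ii) $\mathscr{P}\circ\rightarrow_{\mathscr{R}}^{-1}\subseteq\rightarrow^{-1}\circ[\cdot]_{\mathscr{R}}$, i.e. whenever $c\,\mathscr{P}\,d$ and $c\rightarrow_{\mathscr{R}} c'$, there is $d'\in[c']_{\mathscr{R}}$ with $d\rightarrow d'$.
   Context: $\mathscr{R}(X)=\{q'\mid\exists q\in X.\ q\,\mathscr{R}\,q'\}$, $\rightarrow^{-1}(Y)=\{q\mid\exists y\in Y.\ q\rightarrow y\}$, $\mathscr{S}\circ\mathscr{R}=\{(x,y)\mid\exists z.\ x\,\mathscr{R}\,z\wedge z\,\mathscr{S}\,y\}$. A preorder is a reflexive transitive relation; $[q]_{\mathscr{R}}=\{q'\mid q\,\mathscr{R}\,q'\wedge q'\,\mathscr{R}\,q\}$ and $[\cdot]_{\mathscr{R}}=\bigcup_{q\in Q}\{q\}\times[q]_{\mathscr{R}}$. A transition $q\rightarrow q'$ is $\mathscr{R}$-maximal, $q\rightarrow_{\mathscr{R}}q'$, if for all $q''$, ($q\rightarrow q''$ and $q'\,\mathscr{R}\,q''$) implies $q''\in[q']_{\mathscr{R}}$. *)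

theory Defs
  imports Main
begin

definition eqclass :: "('a \<times> 'a) set \<Rightarrow> 'a \<Rightarrow> 'a set" where
  "eqclass R q = {q'. (q, q') \<in> R \<and> (q', q) \<in> R}"

definition eqrel :: "'a set \<Rightarrow> ('a \<times> 'a) set \<Rightarrow> ('a \<times> 'a) set" where
  "eqrel Q R = (\<Union>q\<in>Q. {q} \<times> eqclass R q)"

definition max_trans :: "('a \<times> 'a) set \<Rightarrow> ('a \<times> 'a) set \<Rightarrow> ('a \<times> 'a) set" where
  "max_trans T R = {(q, q'). (q, q') \<in> T \<and>
      (\<forall>q''. (q, q'') \<in> T \<and> (q', q'') \<in> R \<longrightarrow> q'' \<in> eqclass R q')}"

end

theory Submission
  imports Defs
begin

lemma max_exists:
  assumes fin: "finite S" and tr: "trans R" and x: "x \<in> S" and rS: "\<And>y. y \<in> S \<Longrightarrow> (y,y) \<in> R"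
  shows "\<exists>m\<in>S. (x,m) \<in> R \<and> (\<forall>z\<in>S. (m,z) \<in> R \<longrightarrow> (z,m) \<in> R)"
proof -
  define f where "f m = card {z\<in>S. (z,m)\<in>R}" for m
  have "\<exists>m. (m \<in> S \<and> (x,m) \<in> R) \<and> (\<forall>y. (y \<in> S \<and> (x,y) \<in> R) \<longrightarrow> f y \<le> f m)"
  proof (rule ex_has_greatest_nat[where b="card S + 1"])
    show "x \<in> S \<and> (x,x) \<in> R" using x rS by simp
    show "\<forall>y. y \<in> S \<and> (x, y) \<in> R \<longrightarrow> f y < card S + 1"
      using fin by (auto simp: f_def intro!: le_imp_less_Suc card_mono)
  qed
  then obtain m where m: "m \<in> S" "(x,m) \<in> R" and mx: "\<And>y. y \<in> S \<Longrightarrow> (x,y) \<in> R \<Longrightarrow> f y \<le> f m"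
    by blast
  show ?thesis
  proof (intro bexI[OF _ m(1)] conjI m(2) ballI impI)
    fix z assume z: "z \<in> S" "(m,z) \<in> R"
    show "(z,m) \<in> R"
    proof (rule ccontr)
      assume nz: "(z,m) \<notin> R"
      have xz: "(x,z) \<in> R" using m(2) z(2) tr by (meson transD)
      have sub: "{w\<in>S. (w,m)\<in>R} \<subset> {w\<in>S. (w,z)\<in>R}"
        using z nz tr rS[OF z(1)] by (auto dest: transD)
      have "f m < f z" unfolding f_def using fin sub by (intro psubset_card_mono) auto
      with mx[OF z(1) xz] show False by simp
    qed
  qed
qed

theorem lemma5:
  fixes Q :: "'a set" and T R P :: "('a \<times> 'a) set"
  assumes "finite Q" and "T \<subseteq> Q \<times> Q"
    and "preorder_on Q R"
    and "equiv Q P" and "P \<subseteq> R"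
  shows "(\<forall>b\<in>Q. \<forall>d\<in>Q. \<forall>d'\<in>Q. (d, d') \<in> P \<longrightarrow>
            (d \<in> T\<inverse> `` (R `` {b}) \<longleftrightarrow> d' \<in> T\<inverse> `` (R `` {b})))
         \<longleftrightarrow> ((max_trans T R)\<inverse> O P \<subseteq> eqrel Q R O T\<inverse>)"
proof -
  have RQ: "R \<subseteq> Q \<times> Q" and rf: "\<And>q. q \<in> Q \<Longrightarrow> (q,q) \<in> R" and tr: "trans R"
    using assms(3) by (auto simp: preorder_on_def refl_on_def)
  have PQ: "P \<subseteq> Q \<times> Q" and sy: "sym P" using assms(4) by (auto simp: equiv_def refl_on_def)
  show ?thesis
  proof
    assume H: "\<forall>b\<in>Q. \<forall>d\<in>Q. \<forall>d'\<in>Q. (d, d') \<in> P \<longrightarrow>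
            (d \<in> T\<inverse> `` (R `` {b}) \<longleftrightarrow> d' \<in> T\<inverse> `` (R `` {b}))"
    show "(max_trans T R)\<inverse> O P \<subseteq> eqrel Q R O T\<inverse>"
    proof (clarsimp)
      fix c' c d assume mt: "(c, c') \<in> max_trans T R" and cd: "(c, d) \<in> P"
      have cc': "(c,c') \<in> T" and mx: "\<And>q''. (c,q'') \<in> T \<Longrightarrow> (c',q'') \<in> R \<Longrightarrow> q'' \<in> eqclass R c'"
        using mt by (auto simp: max_trans_def)
      have Q1: "c \<in> Q" "c' \<in> Q" using cc' assms(2) by auto
      have Q2: "d \<in> Q" using cd PQ by auto
      have dc: "(d,c) \<in> P" using cd sy by (auto dest: symD)
      have "c \<in> T\<inverse> `` (R `` {c'})" using cc' rf[OF Q1(2)] by auto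
      hence "d \<in> T\<inverse> `` (R `` {c'})" using H Q1 Q2 cd by blast
      then obtain d' where dd': "(d,d') \<in> T" "(c',d') \<in> R" by auto
      have Q3: "d' \<in> Q" using dd' assms(2) by auto
      have "d \<in> T\<inverse> `` (R `` {d'})" using dd' rf[OF Q3] by auto
      hence "c \<in> T\<inverse> `` (R `` {d'})" using H Q1 Q2 Q3 dc by blast
      then obtain c'' where "(c,c'') \<in> T" "(d',c'') \<in> R" by auto
      moreover have "(c',c'') \<in> R" using dd'(2) calculation(2) tr by (meson transD)
      ultimately have "(c'',c') \<in> R" using mx by (auto simp: eqclass_def)
      hence "(d',c') \<in> R" using \<open>(d',c'') \<in> R\<close> tr by (meson transD)
      hence "(c', d') \<in> eqrel Q R" using Q1 dd' by (auto simp: eqrel_def eqclass_def)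
      thus "(c', d) \<in> eqrel Q R O T\<inverse>" using dd' by auto
    qed
  next
    assume H: "(max_trans T R)\<inverse> O P \<subseteq> eqrel Q R O T\<inverse>"
    have one: "d' \<in> T\<inverse> `` (R `` {b})"
      if t1: "(d,d') \<in> P" and t2: "d \<in> T\<inverse> `` (R `` {b})" for b d d'
    proof -
      obtain x where x: "(d,x) \<in> T" "(b,x) \<in> R" using t2 by auto
      define S where "S = {y. (d,y) \<in> T}"
      have fS: "finite S" using assms(1,2) unfolding S_def
        by (rule_tac finite_subset[of _ Q]) auto
      have xQ: "x \<in> Q" using x assms(2) by auto
      obtain m where m: "m \<in> S" "(x,m) \<in> R" and mm: "\<And>z. z \<in> S \<Longrightarrow> (m,z) \<in> R \<Longrightarrow> (z,m) \<in> R"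
        using max_exists[OF fS tr, of x] x rf assms(2) by (auto simp: S_def)
      have "(d,m) \<in> max_trans T R" using m mm
        by (auto simp: max_trans_def S_def eqclass_def)
      hence "(m,d') \<in> (max_trans T R)\<inverse> O P" using t1 by auto
      hence "(m,d') \<in> eqrel Q R O T\<inverse>" using H by blast
      then obtain y where "(m,y) \<in> R" "(d',y) \<in> T"
        by (auto simp: eqrel_def eqclass_def)
      moreover have "(b,y) \<in> R" using x(2) m(2) calculation(1) tr by (meson transD)
      ultimately show ?thesis by auto
    qed
    show "\<forall>b\<in>Q. \<forall>d\<in>Q. \<forall>d'\<in>Q. (d, d') \<in> P \<longrightarrow>
            (d \<in> T\<inverse> `` (R `` {b}) \<longleftrightarrow> d' \<in> T\<inverse> `` (R `` {b}))"
      using one sy by (meson symD)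
  qed
qed

end
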